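(* Let $N,L\in\mathbb Z_{>0}$, $p_{\mathrm c},p_{\mathrm s},\alpha_{\mathrm s}>0$, $\mathbf h_{\mathrm c},\mathbf h_{\mathrm s}\in\mathbb C^N$ with $\mathbf h_{\mathrm s}\neq\mathbf 0$, $\mathbf w=\mathbf h_{\mathrm s}^*/\|\mathbf h_{\mathrm s}\|$, and $\mathbf s_{\mathrm s}\in\mathbb C^L$ deterministic with $L^{-1}\|\mathbf s_{\mathrm s}\|^2=1$. The base station observes $\mathbf Y=\sqrt{p_{\mathrm c}}\mathbf h_{\mathrm c}\mathbf s_{\mathrm c}^{\mathsf H}+\sqrt{p_{\mathrm s}}\beta\mathbf h_{\mathrm s}\mathbf h_{\mathrm s}^{\mathsf T}\mathbf w\mathbf s_{\mathrm s}^{\mathsf H}+\mathbf N_{\mathrm u}$, with $\beta\sim\mathcal{CN}(0,\alpha_{\mathrm s})$. In the communications-centric design the interference-plus-noise $\mathbf z_{\mathrm c}=\mathrm{vec}(\sqrt{p_{\mathrm c}}\mathbf h_{\mathrm c}\mathbf s_{\mathrm c}^{\mathsf H}+\mathbf N_{\mathrm u})$ is treated as circularly-symmetric Gaussian $\mathcal{CN}(\mathbf 0,\mathbf I_L\otimes(p_{\mathrm c}\mathbf h_{\mathrm c}\mathbf h_{\mathrm c}^{\mathsf H}+\mathbf I_N))$ independent of $\beta$, and the sensing rate is $\mathcal R^{\mathrm c}_{\mathrm{c,s}}=\frac1L I(\mathrm{vec}(\mathbf Y);\beta)$ computed under this model. Then $$\mathcal R^{\mathrm c}_{\mathrm{c,s}}=\frac1L\log_2\!\Big[1+p_{\mathrm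 s}L\alpha_{\mathrm s}\|\mathbf h_{\mathrm s}\|^2\Big(\|\mathbf h_{\mathrm s}\|^2-\frac{p_{\mathrm c}|\mathbf h_{\mathrm s}^{\mathsf H}\mathbf h_{\mathrm c}|^2}{1+p_{\mathrm c}\|\mathbf h_{\mathrm c}\|^2}\Big)\Big].$$
   Context: $\mathrm{vec}(\cdot)$ stacks columns; $\otimes$ is the Kronecker product; $\mathcal{CN}$ denotes the circularly-symmetric complex Gaussian distribution; mutual information is in bits. *)

theory Defs
  imports "HOL-Analysis.Analysis" "HOL-Probability.Probability"
begin

definition herm_form :: "complex^'k \<Rightarrow> complex^'k^'k \<Rightarrow> complex" where
  "herm_form x A = (\<Sum>i\<in>UNIV. \<Sum>j\<in>UNIV. cnj (x$i) * (A$i$j) * (x$j))"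

text \<open>Density (w.r.t. Lebesgue measure on C^k = R^(2k)) of the circularly-symmetric
  complex Gaussian CN(0, Sigma) with positive definite covariance Sigma.\<close>
definition cn_density :: "complex^'k^'k \<Rightarrow> complex^'k \<Rightarrow> real" where
  "cn_density S x = exp (- Re (herm_form x (matrix_inv S))) / (pi ^ CARD('k) * Re (det S))"

definition cn1_density :: "real \<Rightarrow> complex \<Rightarrow> real" where
  "cn1_density a x = exp (- (cmod x)\<^sup>2 / a) / (pi * a)"

text \<open>Column-stacking vec of an N x L matrix (rows indexed by 'n, columns by 'l);
  the entry (j,i) of vec Y is Y_{i,j}.\<close>
definition cvec :: "complex^'l::finite^'n::finite \<Rightarrow> complex^('l \<times> 'n)" where
  "cvec Y = (\<chi> p. Y$(snd p)$(fst p))"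

text \<open>Kronecker product I_L \<otimes> C, indexed compatibly with cvec.\<close>
definition kron_eye :: "complex^'n::finite^'n \<Rightarrow> complex^('l::finite \<times> 'n)^('l \<times> 'n)" where
  "kron_eye C = (\<chi> p q. if fst p = fst q then C$(snd p)$(snd q) else 0)"

definition outerH :: "complex^'n \<Rightarrow> complex^'l \<Rightarrow> complex^'l^'n" where
  "outerH a b = (\<chi> i j. a$i * cnj (b$j))"

end

theory Submission
  imports Defs
begin


lemma cosh_bounds:
  fixes s y :: real
  assumes s0: "0 \<le> s" and s1: "s \<le> 1"
  shows "1 + (s*y)\<^sup>2/2 \<le> cosh (s*y)" and "cosh (s*y) \<le> 1 + (s*y)\<^sup>2/2 + s^4 * cosh y"
proof -
  define c where "c = (\<lambda>x::real. \<lambda>n. if even n then x^n /\<^sub>R fact n else 0)"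
  have cs: "c x sums cosh x" for x unfolding c_def by (rule cosh_converges)
  have cnn: "0 \<le> c x n" for x n unfolding c_def by (auto simp: zero_le_even_power)
  have shift: "(\<lambda>n. c x (n+3)) sums (cosh x - 1 - x^2/2)" for x
  proof -
    have "(\<lambda>n. c x (n+3)) sums (cosh x - (\<Sum>i<3. c x i))"
      using cs[of x] by (subst sums_iff_shift) simp
    moreover have "(\<Sum>i<3. c x i) = 1 + x^2/2"
      by (simp add: c_def numeral_3_eq_3 lessThan_Suc power2_eq_square)
    moreover have "cosh x - (1 + x^2/2) = cosh x - 1 - x^2/2" by linarith
    ultimately show ?thesis by metis
  qed
  have "0 \<le> cosh (s*y) - 1 - (s*y)\<^sup>2/2"
    by (rule sums_le[OF _ sums_zero shift[of "s*y"]]) (rule cnn)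
  then show "1 + (s*y)\<^sup>2/2 \<le> cosh (s*y)" by simp
  have le: "c (s*y) (n+3) \<le> s^4 * c y (n+3)" for n
  proof (cases "even (n+3)")
    case True
    then have n1: "n \<ge> 1" by (cases n) auto
    have "s^(n+3) \<le> s^4" using s0 s1 n1 by (intro power_decreasing) auto
    then have "s^(n+3) * (y^(n+3) / fact (n+3)) \<le> s^4 * (y^(n+3) / fact (n+3))"
      using True by (intro mult_right_mono) (auto simp: zero_le_even_power)
    moreover have "c (s*y) (n+3) = s^(n+3) * (y^(n+3) / fact (n+3))"
      using True by (simp add: c_def power_mult_distrib divide_inverse mult.commute)
    moreover have "c y (n+3) = y^(n+3) / fact (n+3)"
      using True by (simp add: c_def divide_inverse mult.commute)
    ultimately show ?thesis by simp
  next
    case False then show ?thesis by (simp add: c_def)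
  qed
  have "cosh (s*y) - 1 - (s*y)\<^sup>2/2 \<le> s^4 * (cosh y - 1 - y^2/2)"
    by (rule sums_le[OF le shift[of "s*y"] sums_mult[OF shift[of y]]])
  also have "\<dots> \<le> s^4 * cosh y"
  proof (rule mult_left_mono)
    show "cosh y - 1 - y^2/2 \<le> cosh y" using zero_le_power2[of y] by linarith
  qed (simp add: s0)
  finally show "cosh (s*y) \<le> 1 + (s*y)\<^sup>2/2 + s^4 * cosh y" by simp
qed

lemma small_le:
  fixes a b K s0 :: real
  assumes s0: "0 < s0" and K: "0 \<le> K" and H: "\<And>s. 0 < s \<Longrightarrow> s \<le> s0 \<Longrightarrow> a \<le> b + s * K"
  shows "a \<le> b"
proof (rule field_le_epsilon)
  fix e :: real assume e: "0 < e"
  define s where "s = min s0 (e / (K + 1))"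
  have sp: "0 < s" using s0 e K by (simp add: s_def)
  have "s * K \<le> (e / (K + 1)) * K" using K by (intro mult_right_mono) (auto simp: s_def)
  also have "\<dots> \<le> e" using e K by (simp add: field_simps)
  moreover have "s \<le> s0" by (simp add: s_def)
  ultimately show "a \<le> b + e" using H[OF sp] by linarith
qed

lemma mgf_moments:
  fixes N :: "'a measure" and W :: "'a \<Rightarrow> real" and v :: real
  assumes N: "prob_space N" and Wm[measurable]: "W \<in> borel_measurable N"
    and mgf: "\<And>t. (\<integral>\<^sup>+x. ennreal (exp (t * W x)) \<partial>N) = ennreal (exp (t^2 * v))"
  shows "integrable N (\<lambda>x. (W x)\<^sup>2)" "(\<integral>x. (W x)\<^sup>2 \<partial>N) = 2 * v"
        "integrable N W" "(\<integral>x. W x \<partial>N) = 0"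
proof -
  interpret prob_space N by fact
  have hb: "has_bochner_integral N (\<lambda>x. exp (t * W x)) (exp (t^2 * v))" for t
    by (rule has_bochner_integral_nn_integral) (auto simp: mgf)
  have intE: "integrable N (\<lambda>x. exp (t * W x))" for t using hb[of t] by (simp add: has_bochner_integral_iff)
  have valE: "(\<integral>x. exp (t * W x) \<partial>N) = exp (t^2 * v)" for t using hb[of t] by (simp add: has_bochner_integral_iff)
  have coshe: "cosh (t * W x) = (exp (t * W x) + exp ((-t) * W x)) / 2" for t x
    by (simp add: cosh_def)
  have intC: "integrable N (\<lambda>x. cosh (t * W x))" for t
    unfolding coshe using intE[of t] intE[of "-t"] by simp
  have valC: "(\<integral>x. cosh (t * W x) \<partial>N) = exp (t^2 * v)" for t
    unfolding coshe using intE[of t] intE[of "-t"] valE[of t] valE[of "-t"] by simp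
  have c1: "1 + (W x)\<^sup>2/2 \<le> cosh (W x)" for x using cosh_bounds(1)[of 1 "W x"] by simp
  have c1': "1 \<le> cosh (1 * W x)" for x
  proof -
    have "0 \<le> (W x)\<^sup>2/2" by simp
    then have "1 \<le> cosh (W x)" using c1[of x] by linarith
    then show ?thesis by simp
  qed
  have "(\<integral>x. 1 \<partial>N) \<le> (\<integral>x. cosh (1 * W x) \<partial>N)"
    using c1' by (intro integral_mono intC) auto
  then have "1 \<le> exp v" using valC[of 1] by (simp add: prob_space)
  then have v0: "0 \<le> v" by simp
  show intW2: "integrable N (\<lambda>x. (W x)\<^sup>2)"
  proof (rule Bochner_Integration.integrable_bound[OF integrable_mult_right[OF intC[of 1], of 2]])
    show "AE x in N. norm ((W x)\<^sup>2) \<le> norm (2 * cosh (1 * W x))"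
    proof (intro AE_I2)
      fix x have "(W x)\<^sup>2 \<le> 2 * cosh (W x)" using c1[of x] c1'[of x] by simp
      then show "norm ((W x)\<^sup>2) \<le> norm (2 * cosh (1 * W x))" using c1'[of x] by simp
    qed
  qed simp
  show intW: "integrable N W"
  proof (rule Bochner_Integration.integrable_bound[OF intC[of 1]])
    show "AE x in N. norm (W x) \<le> norm (cosh (1 * W x))"
    proof (intro AE_I2)
      fix x have "0 \<le> (\<bar>W x\<bar> - 1)\<^sup>2" by simp
      then have "\<bar>W x\<bar> \<le> 1 + (W x)\<^sup>2/2" by (simp add: power2_eq_square algebra_simps)
      then show "norm (W x) \<le> norm (cosh (1 * W x))" using c1[of x] by simp
    qed
  qed simp
  define E2 where "E2 = (\<integral>x. (W x)\<^sup>2 \<partial>N)"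
  define s0 where "s0 = min 1 (1 / (v + 1))"
  have s0p: "0 < s0" using v0 by (simp add: s0_def)
  have sv: "s * v \<le> 1" if "0 < s" "s \<le> s0" for s
  proof -
    have "s * v \<le> (1/(v+1)) * v" using that v0 by (intro mult_right_mono) (auto simp: s0_def)
    also have "\<dots> \<le> 1" using v0 by (simp add: field_simps)
    finally show ?thesis .
  qed
  have low: "1 + s^2 * E2 / 2 \<le> exp (s^2 * v)" if "0 < s" "s \<le> 1" for s
  proof -
    have "(\<integral>x. 1 + s^2 * (W x)\<^sup>2 / 2 \<partial>N) \<le> (\<integral>x. cosh (s * W x) \<partial>N)"
      using cosh_bounds(1)[of s] that intW2
      by (intro integral_mono intC) (auto simp: power_mult_distrib)
    then show ?thesis using intW2 valC[of s] by (simp add: E2_def prob_space)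
  qed
  have upp: "exp (s^2 * v) \<le> 1 + s^2 * E2 / 2 + s^4 * exp v" if "0 < s" "s \<le> 1" for s
  proof -
    have "(\<integral>x. cosh (s * W x) \<partial>N) \<le> (\<integral>x. 1 + s^2 * (W x)\<^sup>2 / 2 + s^4 * cosh (1 * W x) \<partial>N)"
      using cosh_bounds(2)[of s] that intW2 intC[of 1]
      by (intro integral_mono intC) (auto simp: power_mult_distrib)
    then show ?thesis using intW2 intC[of 1] valC[of s] valC[of 1] by (simp add: E2_def prob_space)
  qed
  have "E2 / 2 \<le> v"
  proof (rule small_le[OF s0p, of "v^2"])
    fix s :: real assume s: "0 < s" "s \<le> s0"
    have s1: "s \<le> 1" using s by (simp add: s0_def)
    have "s^2 \<le> s" using s s1 by (simp add: power2_eq_square mult_left_le_one_le)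
    then have "s^2 * v \<le> s * v" using v0 by (rule mult_right_mono)
    then have "s^2 * v \<le> 1" using sv[OF s] by linarith
    then have "exp (s^2 * v) \<le> 1 + s^2 * v + (s^2 * v)\<^sup>2" using v0 by (intro exp_bound) auto
    moreover have "(s^2 * v)\<^sup>2 = s^2 * (s^2 * v^2)" by (simp add: power_mult_distrib)
    moreover have "s^2 * (v + s^2 * v^2) = s^2 * v + s^2 * (s^2 * v^2)" by (simp add: distrib_left)
    ultimately have "s^2 * (E2 / 2) \<le> s^2 * (v + s^2 * v^2)"
      using low[OF s(1) s1] by simp
    then have "E2/2 \<le> v + s^2 * v^2" using s by simp
    moreover have "s^2 * v^2 \<le> s * v^2" using s s1 by (intro mult_right_mono) (auto simp: power2_eq_square)
    ultimately show "E2/2 \<le> v + s * v^2" by linarith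
  qed simp
  moreover have "v \<le> E2 / 2"
  proof (rule small_le[OF s0p, of "exp v"])
    fix s :: real assume s: "0 < s" "s \<le> s0"
    have s1: "s \<le> 1" using s by (simp add: s0_def)
    have "1 + s^2 * v \<le> exp (s^2 * v)" by simp
    moreover have "s^4 * exp v = s^2 * (s^2 * exp v)" by (simp add: power_mult_distrib flip: power_add)
    moreover have "s^2 * (E2 / 2 + s^2 * exp v) = s^2 * E2 / 2 + s^2 * (s^2 * exp v)" by (simp add: distrib_left)
    ultimately have "s^2 * v \<le> s^2 * (E2 / 2 + s^2 * exp v)"
      using upp[OF s(1) s1] exp_ge_add_one_self[of "s^2 * v"] by linarith
    then have "v \<le> E2/2 + s^2 * exp v" using s by simp
    moreover have "s^2 * exp v \<le> s * exp v" using s s1 by (intro mult_right_mono) (auto simp: power2_eq_square)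
    ultimately show "v \<le> E2/2 + s * exp v" by linarith
  qed simp
  ultimately show "(\<integral>x. (W x)\<^sup>2 \<partial>N) = 2 * v" by (simp add: E2_def prob_space)
  define E1 where "E1 = (\<integral>x. W x \<partial>N)"
  have lowE: "1 + t * E1 \<le> exp (t^2 * v)" for t
  proof -
    have "(\<integral>x. 1 + t * W x \<partial>N) \<le> (\<integral>x. exp (t * W x) \<partial>N)"
      using intW by (intro integral_mono intE) auto
    then show ?thesis using intW valE[of t] by (simp add: E1_def prob_space)
  qed
  have ub: "exp (s^2 * v) \<le> 1 + s * (s * (v + v^2))" if s: "0 < s" "s \<le> s0" for s
  proof -
    have s1: "s \<le> 1" using s by (simp add: s0_def)
    have "s^2 \<le> s" using s s1 by (simp add: power2_eq_square mult_left_le_one_le)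
    then have "s^2 * v \<le> s * v" using v0 by (rule mult_right_mono)
    then have "s^2 * v \<le> 1" using sv[OF s] by linarith
    then have "exp (s^2 * v) \<le> 1 + s^2 * v + (s^2 * v)\<^sup>2" using v0 by (intro exp_bound) auto
    also have "(s^2 * v)\<^sup>2 \<le> s^2 * v^2"
    proof -
      have "s^4 \<le> s^2" using s s1 by (intro power_decreasing) auto
      then show ?thesis by (simp add: power_mult_distrib) (intro mult_right_mono, auto)
    qed
    finally show ?thesis by (simp add: algebra_simps power2_eq_square)
  qed
  have "E1 \<le> 0"
  proof (rule small_le[OF s0p, of "v + v^2"])
    fix s :: real assume s: "0 < s" "s \<le> s0"
    have s1: "s \<le> 1" using s by (simp add: s0_def)
    from lowE[of s] ub[OF s] have "s * E1 \<le> s * (s * (v + v^2))" by simp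
    then have "E1 \<le> s * (v + v^2)" using s by simp
    then show "E1 \<le> 0 + s * (v + v^2)" by simp
  qed (use v0 in simp)
  moreover have "0 \<le> E1"
  proof (rule small_le[OF s0p, of "v + v^2"])
    fix s :: real assume s: "0 < s" "s \<le> s0"
    from lowE[of "-s"] ub[OF s] have "s * (- E1) \<le> s * (s * (v + v^2))" by simp
    then have "- E1 \<le> s * (v + v^2)" using s by (metis mult_le_cancel_left_pos)
    then show "0 \<le> E1 + s * (v + v^2)" by simp
  qed (use v0 in simp)
  ultimately show "(\<integral>x. W x \<partial>N) = 0" by (simp add: E1_def prob_space)
qed

lemma nn_integral_shift:
  fixes f :: "'b::euclidean_space \<Rightarrow> ennreal"
  assumes [measurable]: "f \<in> borel_measurable borel"
  shows "(\<integral>\<^sup>+x. f (c + x) \<partial>lborel) = (\<integral>\<^sup>+x. f x \<partial>lborel)"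
proof -
  have "(\<integral>\<^sup>+x. f x \<partial>lborel) = (\<integral>\<^sup>+x. f x \<partial>(distr lborel borel ((+) c)))"
    by (simp add: lborel_distr_plus)
  also have "\<dots> = (\<integral>\<^sup>+x. f (c + x) \<partial>lborel)"
    by (subst nn_integral_distr) auto
  finally show ?thesis ..
qed

lemma density_pos_const:
  fixes X :: "'w \<Rightarrow> 'b::euclidean_space"
  assumes "prob_space M" and X: "distributed M lborel X (\<lambda>x. ennreal (h x / D))"
    and hpos: "\<And>x. 0 < h x"
  shows "0 < D" "(\<integral>\<^sup>+x. ennreal (h x / D) \<partial>lborel) = 1"
proof -
  interpret prob_space M by fact
  have "emeasure (distr M lborel X) UNIV = 1"
    using X by (subst emeasure_distr) (auto simp: distributed_def prob_space[symmetric] emeasure_space_1)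
  then have "emeasure (density lborel (\<lambda>x. ennreal (h x / D))) UNIV = 1"
    using X by (simp add: distributed_def)
  moreover have "(\<lambda>x. ennreal (h x / D)) \<in> borel_measurable lborel"
    using X by (simp add: distributed_def)
  ultimately show I: "(\<integral>\<^sup>+x. ennreal (h x / D) \<partial>lborel) = 1"
    by (simp add: emeasure_density)
  show "0 < D"
  proof (rule ccontr)
    assume "\<not> 0 < D"
    then have "h x / D \<le> 0" for x using hpos[of x] by (intro divide_nonneg_nonpos) auto
    then have "(\<lambda>x. ennreal (h x / D)) = (\<lambda>x. 0)" by (intro ext ennreal_neg)
    then show False using I by simp
  qed
qed

lemma gauss_moments:
  fixes X :: "'w \<Rightarrow> 'b::euclidean_space" and q m :: "'b \<Rightarrow> real"
  assumes P: "prob_space M" and X: "distributed M lborel X (\<lambda>x. ennreal (exp (- q x) / D))"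
    and qm[measurable]: "q \<in> borel_measurable borel" and mm[measurable]: "m \<in> borel_measurable borel"
    and shift: "\<And>x s. q (x + s *\<^sub>R d) = q x + 2 * s * m x + s^2 * g"
  shows "integrable M (\<lambda>\<omega>. (m (X \<omega>))\<^sup>2)" "(\<integral>\<omega>. (m (X \<omega>))\<^sup>2 \<partial>M) = g / 2"
        "integrable M (\<lambda>\<omega>. m (X \<omega>))" "(\<integral>\<omega>. m (X \<omega>) \<partial>M) = 0"
proof -
  interpret prob_space M by fact
  have D: "0 < D" and I1: "(\<integral>\<^sup>+x. ennreal (exp (- q x) / D) \<partial>lborel) = 1"
    using density_pos_const[OF P X] by auto
  have Xm[measurable]: "X \<in> measurable M borel" using X by (simp add: distributed_def)
  have key: "(\<integral>\<^sup>+x. ennreal (exp (- q x) / D * exp (t * m x)) \<partial>lborel) = ennreal (exp (t^2 * (g/4)))" for t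
  proof -
    define s where "s = - t / 2"
    have "1 = (\<integral>\<^sup>+x. ennreal (exp (- q (s *\<^sub>R d + x)) / D) \<partial>lborel)"
      using I1 by (subst nn_integral_shift) auto
    also have "\<dots> = (\<integral>\<^sup>+x. ennreal (exp (- (t^2 * (g/4)))) * ennreal (exp (- q x) / D * exp (t * m x)) \<partial>lborel)"
    proof (intro nn_integral_cong)
      fix x
      have "q (s *\<^sub>R d + x) = q x - t * m x + t^2 * (g/4)"
        using shift[of x s] by (simp add: s_def add.commute power2_eq_square)
      then have "exp (- q (s *\<^sub>R d + x)) / D = exp (- (t^2 * (g/4))) * (exp (- q x) / D * exp (t * m x))"
        by (simp add: exp_add[symmetric] exp_diff[symmetric] field_simps)
      then have "ennreal (exp (- q (s *\<^sub>R d + x)) / D) = ennreal (exp (- (t^2 * (g/4))) * (exp (- q x) / D * exp (t * m x)))"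
        by (rule arg_cong[where f=ennreal])
      also have "\<dots> = ennreal (exp (- (t^2 * (g/4)))) * ennreal (exp (- q x) / D * exp (t * m x))"
        by (rule ennreal_mult) (use D in auto)
      finally show "ennreal (exp (- q (s *\<^sub>R d + x)) / D) = ennreal (exp (- (t^2 * (g/4)))) * ennreal (exp (- q x) / D * exp (t * m x))" .
    qed
    also have "\<dots> = ennreal (exp (- (t^2 * (g/4)))) * (\<integral>\<^sup>+x. ennreal (exp (- q x) / D * exp (t * m x)) \<partial>lborel)"
      by (rule nn_integral_cmult) auto
    finally have e: "1 = ennreal (exp (- (t^2 * (g/4)))) * (\<integral>\<^sup>+x. ennreal (exp (- q x) / D * exp (t * m x)) \<partial>lborel)" .
    have "ennreal (exp (t^2 * (g/4))) = ennreal (exp (t^2 * (g/4))) * 1" by simp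
    also have "\<dots> = (ennreal (exp (t^2 * (g/4))) * ennreal (exp (- (t^2 * (g/4))))) * (\<integral>\<^sup>+x. ennreal (exp (- q x) / D * exp (t * m x)) \<partial>lborel)"
      by (subst e) (simp add: mult.assoc)
    also have "ennreal (exp (t^2 * (g/4))) * ennreal (exp (- (t^2 * (g/4)))) = 1"
      by (simp add: ennreal_mult[symmetric] exp_minus)
    finally show ?thesis by simp
  qed
  have mgf: "(\<integral>\<^sup>+\<omega>. ennreal (exp (t * m (X \<omega>))) \<partial>M) = ennreal (exp (t^2 * (g/4)))" for t
  proof -
    have "(\<integral>\<^sup>+\<omega>. ennreal (exp (t * m (X \<omega>))) \<partial>M) = (\<integral>\<^sup>+x. ennreal (exp (- q x) / D) * ennreal (exp (t * m x)) \<partial>lborel)"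
      by (rule distributed_nn_integral[OF X, symmetric]) auto
    also have "\<dots> = (\<integral>\<^sup>+x. ennreal (exp (- q x) / D * exp (t * m x)) \<partial>lborel)"
    proof (intro nn_integral_cong)
      fix x
      have "0 \<le> exp (- q x) / D" using D by simp
      then show "ennreal (exp (- q x) / D) * ennreal (exp (t * m x)) = ennreal (exp (- q x) / D * exp (t * m x))"
        by (rule ennreal_mult[symmetric]) (rule exp_ge_zero)
    qed
    also have "\<dots> = ennreal (exp (t^2 * (g/4)))" by (rule key)
    finally show ?thesis .
  qed
  have Wm: "(\<lambda>\<omega>. m (X \<omega>)) \<in> borel_measurable M" by measurable
  note mm = mgf_moments[OF P Wm mgf]
  show "integrable M (\<lambda>\<omega>. (m (X \<omega>))\<^sup>2)" by (rule mm(1))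
  show "(\<integral>\<omega>. (m (X \<omega>))\<^sup>2 \<partial>M) = g / 2" using mm(2) by simp
  show "integrable M (\<lambda>\<omega>. m (X \<omega>))" by (rule mm(3))
  show "(\<integral>\<omega>. m (X \<omega>) \<partial>M) = 0" by (rule mm(4))
qed

lemma cgauss_scale:
  fixes \<alpha> a :: real
  assumes al: "0 < \<alpha>" and a: "0 < a"
    and norm: "(\<integral>\<^sup>+b. ennreal (exp (- (cmod b)\<^sup>2 / \<alpha>)) \<partial>lborel) = ennreal (pi * \<alpha>)"
  shows "(\<integral>\<^sup>+b. ennreal (exp (- (cmod b)\<^sup>2 / a)) \<partial>lborel) = ennreal (pi * a)"
proof -
  define l where "l = sqrt (a / \<alpha>)"
  have l0: "0 < l" using al a by (simp add: l_def)
  have l2: "l^2 = a / \<alpha>" using al a by (simp add: l_def)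
  have "(\<integral>\<^sup>+b. ennreal (exp (- (cmod b)\<^sup>2 / a)) \<partial>lborel)
      = (\<integral>\<^sup>+b. ennreal (exp (- (cmod b)\<^sup>2 / a)) \<partial>(density (distr lborel borel (\<lambda>x. 0 + l *\<^sub>R x)) (\<lambda>_. \<bar>l\<bar>^DIM(complex))))"
    using lborel_affine[of l "0::complex"] l0 by simp
  also have "\<dots> = (\<integral>\<^sup>+b. ennreal (l^2) * ennreal (exp (- (cmod b)\<^sup>2 / \<alpha>)) \<partial>lborel)"
  proof -
    have "(\<integral>\<^sup>+b. ennreal (exp (- (cmod b)\<^sup>2 / a)) \<partial>(density (distr lborel borel (\<lambda>x. 0 + l *\<^sub>R x)) (\<lambda>_. \<bar>l\<bar>^DIM(complex))))
        = (\<integral>\<^sup>+b. ennreal (\<bar>l\<bar>^DIM(complex)) * ennreal (exp (- (cmod b)\<^sup>2 / a)) \<partial>(distr lborel borel (\<lambda>x. 0 + l *\<^sub>R x)))"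
      by (subst nn_integral_density) auto
    also have "\<dots> = (\<integral>\<^sup>+b. ennreal (\<bar>l\<bar>^DIM(complex)) * ennreal (exp (- (cmod (0 + l *\<^sub>R b))\<^sup>2 / a)) \<partial>lborel)"
      by (subst nn_integral_distr) auto
    also have "\<dots> = (\<integral>\<^sup>+b. ennreal (l^2) * ennreal (exp (- (cmod b)\<^sup>2 / \<alpha>)) \<partial>lborel)"
    proof (intro nn_integral_cong)
      fix b :: complex
      have "(cmod (0 + l *\<^sub>R b))\<^sup>2 / a = (cmod b)\<^sup>2 / \<alpha>"
        using l0 l2 a al by (simp add: power_mult_distrib field_simps)
      then show "ennreal (\<bar>l\<bar>^DIM(complex)) * ennreal (exp (- (cmod (0 + l *\<^sub>R b))\<^sup>2 / a)) = ennreal (l^2) * ennreal (exp (- (cmod b)\<^sup>2 / \<alpha>))"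
        using l0 by simp
    qed
    finally show ?thesis .
  qed
  also have "\<dots> = ennreal (l^2) * (\<integral>\<^sup>+b. ennreal (exp (- (cmod b)\<^sup>2 / \<alpha>)) \<partial>lborel)"
    by (rule nn_integral_cmult) auto
  also have "\<dots> = ennreal (l^2) * ennreal (pi * \<alpha>)"
    by (simp only: norm)
  also have "\<dots> = ennreal (pi * a)"
    using l2 al by (simp add: ennreal_mult[symmetric] field_simps)
  finally show ?thesis .
qed

lemma cgauss_int:
  fixes \<alpha> a :: real and t :: complex
  assumes al: "0 < \<alpha>" and a: "0 < a"
    and norm: "(\<integral>\<^sup>+b. ennreal (exp (- (cmod b)\<^sup>2 / \<alpha>)) \<partial>lborel) = ennreal (pi * \<alpha>)"
  shows "(\<integral>\<^sup>+b. ennreal (exp (2 * Re (cnj b * t) - (cmod b)\<^sup>2 / a)) \<partial>lborel) = ennreal (pi * a * exp (a * (cmod t)\<^sup>2))"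
proof -
  have id: "2 * Re (cnj b * t) - (cmod b)\<^sup>2 / a = a * (cmod t)\<^sup>2 - (cmod (- (of_real a * t) + b))\<^sup>2 / a" for b
    unfolding cmod_power2 using a by (simp add: field_simps power2_eq_square)
  have "(\<integral>\<^sup>+b. ennreal (exp (2 * Re (cnj b * t) - (cmod b)\<^sup>2 / a)) \<partial>lborel)
      = (\<integral>\<^sup>+b. ennreal (exp (a * (cmod t)\<^sup>2)) * ennreal (exp (- (cmod (- (of_real a * t) + b))\<^sup>2 / a)) \<partial>lborel)"
  proof (intro nn_integral_cong)
    fix b
    have "exp (2 * Re (cnj b * t) - (cmod b)\<^sup>2 / a) = exp (a * (cmod t)\<^sup>2) * exp (- (cmod (- (of_real a * t) + b))\<^sup>2 / a)"
      unfolding id by (simp add: exp_add[symmetric])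
    then show "ennreal (exp (2 * Re (cnj b * t) - (cmod b)\<^sup>2 / a)) = ennreal (exp (a * (cmod t)\<^sup>2)) * ennreal (exp (- (cmod (- (of_real a * t) + b))\<^sup>2 / a))"
      by (metis ennreal_mult exp_ge_zero)
  qed
  also have "\<dots> = ennreal (exp (a * (cmod t)\<^sup>2)) * (\<integral>\<^sup>+b. ennreal (exp (- (cmod (- (of_real a * t) + b))\<^sup>2 / a)) \<partial>lborel)"
    by (rule nn_integral_cmult) auto
  also have "(\<integral>\<^sup>+b. ennreal (exp (- (cmod (- (of_real a * t) + b))\<^sup>2 / a)) \<partial>lborel) = (\<integral>\<^sup>+b. ennreal (exp (- (cmod b)\<^sup>2 / a)) \<partial>lborel)"
    by (rule nn_integral_shift[where f="\<lambda>b. ennreal (exp (- (cmod b)\<^sup>2 / a))"]) auto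
  also have "\<dots> = ennreal (pi * a)" by (rule cgauss_scale[OF al a norm])
  also have "ennreal (exp (a * (cmod t)\<^sup>2)) * ennreal (pi * a) = ennreal (pi * a * exp (a * (cmod t)\<^sup>2))"
    using a by (simp add: ennreal_mult[symmetric] mult.commute)
  finally show ?thesis .
qed

lemma complex_integrable_ReIm:
  fixes f :: "'a \<Rightarrow> complex"
  assumes "integrable M (\<lambda>x. Re (f x))" "integrable M (\<lambda>x. Im (f x))"
  shows "integrable M f" "integral\<^sup>L M f = Complex (\<integral>x. Re (f x) \<partial>M) (\<integral>x. Im (f x) \<partial>M)"
proof -
  have eq: "f = (\<lambda>x. complex_of_real (Re (f x)) + \<i> * complex_of_real (Im (f x)))"
    by (rule ext) (simp add: complex_eq_iff)
  show "integrable M f" by (subst eq) (use assms in auto)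
  show "integral\<^sup>L M f = Complex (\<integral>x. Re (f x) \<partial>M) (\<integral>x. Im (f x) \<partial>M)"
    by (subst eq) (use assms in \<open>simp add: complex_eq_iff\<close>)
qed

lemma sets_lborel_pair:
  "sets (lborel \<Otimes>\<^sub>M lborel) = sets (borel :: ('a::euclidean_space \<times> 'b::euclidean_space) measure)"
proof -
  have "sets (lborel \<Otimes>\<^sub>M lborel) = sets (borel \<Otimes>\<^sub>M borel :: ('a \<times> 'b) measure)"
    by (rule sets_pair_measure_cong) simp_all
  then show ?thesis by (metis borel_prod)
qed

lemma cont_meas_pair:
  fixes f :: "('a::euclidean_space \<times> 'b::euclidean_space) \<Rightarrow> 'c::topological_space"
  assumes "continuous_on UNIV f"
  shows "f \<in> borel_measurable (lborel \<Otimes>\<^sub>M lborel)"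
proof -
  have eq: "(lborel \<Otimes>\<^sub>M lborel \<rightarrow>\<^sub>M borel) = (borel \<rightarrow>\<^sub>M (borel::'c measure))"
    by (rule measurable_cong_sets[OF sets_lborel_pair refl])
  show ?thesis unfolding eq by (rule borel_measurable_continuous_onI[OF assms])
qed

lemma cont_meas:
  fixes f :: "'a::euclidean_space \<Rightarrow> 'c::topological_space"
  assumes "continuous_on UNIV f"
  shows "f \<in> borel_measurable lborel"
  using borel_measurable_continuous_onI[OF assms] by simp



lemma continuous_on_smul_vec[continuous_intros]:
  fixes c :: "complex^'n"
  assumes "continuous_on S f"
  shows "continuous_on S (\<lambda>x. f x *s c)"
proof -
  have eq: "(\<lambda>x. f x *s c) = (\<lambda>x. \<chi> i. f x * c$i)" by (simp add: vec_eq_iff fun_eq_iff)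
  show ?thesis unfolding eq by (intro continuous_intros assms)
qed

lemma indep_from_distr:
  fixes X :: "'w \<Rightarrow> 'a::euclidean_space" and Y :: "'w \<Rightarrow> 'b::euclidean_space" and f g :: "_ \<Rightarrow> real"
  assumes P: "prob_space M" and Xm[measurable]: "X \<in> measurable M borel" and Ym[measurable]: "Y \<in> measurable M borel"
    and ind: "distr M (lborel \<Otimes>\<^sub>M lborel) (\<lambda>\<omega>. (X \<omega>, Y \<omega>)) = distr M lborel X \<Otimes>\<^sub>M distr M lborel Y"
    and fm[measurable]: "f \<in> borel_measurable borel" and gm[measurable]: "g \<in> borel_measurable borel"
  shows "prob_space.indep_var M borel (\<lambda>\<omega>. f (X \<omega>)) borel (\<lambda>\<omega>. g (Y \<omega>))"
proof -
  interpret prob_space M by fact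
  have sfY: "sigma_finite_measure (distr (distr M lborel Y) borel g)"
    by (rule prob_space_imp_sigma_finite, rule prob_space.prob_space_distr, rule prob_space_distr) auto
  have "distr M borel (\<lambda>\<omega>. f (X \<omega>)) \<Otimes>\<^sub>M distr M borel (\<lambda>\<omega>. g (Y \<omega>))
      = distr (distr M lborel X) borel f \<Otimes>\<^sub>M distr (distr M lborel Y) borel g"
    by (simp add: distr_distr comp_def)
  also have "\<dots> = distr (distr M lborel X \<Otimes>\<^sub>M distr M lborel Y) (borel \<Otimes>\<^sub>M borel) (\<lambda>(x, y). (f x, g y))"
    by (rule pair_measure_distr) (auto intro: sfY)
  also have "\<dots> = distr (distr M (lborel \<Otimes>\<^sub>M lborel) (\<lambda>\<omega>. (X \<omega>, Y \<omega>))) (borel \<Otimes>\<^sub>M borel) (\<lambda>(x, y). (f x, g y))"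
    by (simp only: ind)
  also have "\<dots> = distr M (borel \<Otimes>\<^sub>M borel) (\<lambda>\<omega>. (f (X \<omega>), g (Y \<omega>)))"
    by (subst distr_distr) (auto simp: comp_def)
  finally show ?thesis by (subst indep_var_distribution_eq) auto
qed

lemma main_generic:
  fixes M :: "'w measure" and \<beta> :: "'w \<Rightarrow> complex" and z :: "'w \<Rightarrow> complex^'k::finite"
    and q :: "complex^'k \<Rightarrow> real" and l :: "complex^'k \<Rightarrow> complex" and c :: "complex^'k"
    and \<gamma> \<alpha> D :: real
  assumes P: "prob_space M" and al: "0 < \<alpha>"
    and B: "distributed M lborel \<beta> (\<lambda>x. ennreal (cn1_density \<alpha> x))"
    and Z: "distributed M lborel z (\<lambda>x. ennreal (exp (- q x) / D))"
    and ind: "distr M (lborel \<Otimes>\<^sub>M lborel) (\<lambda>\<omega>. (\<beta> \<omega>, z \<omega>)) = distr M lborel \<beta> \<Otimes>\<^sub>M distr M lborel z"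
    and qc: "continuous_on UNIV q" and lc: "continuous_on UNIV l"
    and qsh: "\<And>x b. q (x + b *s c) = q x + 2 * Re (cnj b * l x) + (cmod b)\<^sup>2 * \<gamma>"
    and lsh: "\<And>x b. l (x + b *s c) = l x + b * \<gamma>"
  shows "prob_space.mutual_information M 2 lborel lborel (\<lambda>\<omega>. \<beta> \<omega> *s c + z \<omega>) \<beta> = log 2 (1 + \<alpha> * \<gamma>)"
proof -
  interpret prob_space M by fact
  interpret information_space M 2 by unfold_locales simp
  have qm[measurable]: "q \<in> borel_measurable borel" using qc by (rule borel_measurable_continuous_onI)
  have lm[measurable]: "l \<in> borel_measurable borel" using lc by (rule borel_measurable_continuous_onI)
  have Bm[measurable]: "\<beta> \<in> measurable M borel" using B by (simp add: distributed_def)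
  have Zm[measurable]: "z \<in> measurable M borel" using Z by (simp add: distributed_def)
  have B': "distributed M lborel \<beta> (\<lambda>x. ennreal (exp (- ((cmod x)\<^sup>2 / \<alpha>)) / (pi * \<alpha>)))"
    using B by (simp add: cn1_density_def)
  have Bre: "integrable M (\<lambda>\<omega>. (Re (\<beta> \<omega>))\<^sup>2)" "(\<integral>\<omega>. (Re (\<beta> \<omega>))\<^sup>2 \<partial>M) = \<alpha> / 2"
      "integrable M (\<lambda>\<omega>. Re (\<beta> \<omega>))" "(\<integral>\<omega>. Re (\<beta> \<omega>) \<partial>M) = 0"
  proof -
    have "(cmod (x + s *\<^sub>R complex_of_real \<alpha>))\<^sup>2 / \<alpha> = (cmod x)\<^sup>2 / \<alpha> + 2 * s * Re x + s\<^sup>2 * \<alpha>" for x s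
      unfolding cmod_power2 using al by (simp add: field_simps power2_eq_square)
    note g = gauss_moments[OF P B', of Re "complex_of_real \<alpha>" \<alpha>, OF _ _ this]
    show "integrable M (\<lambda>\<omega>. (Re (\<beta> \<omega>))\<^sup>2)" "(\<integral>\<omega>. (Re (\<beta> \<omega>))\<^sup>2 \<partial>M) = \<alpha> / 2"
      "integrable M (\<lambda>\<omega>. Re (\<beta> \<omega>))" "(\<integral>\<omega>. Re (\<beta> \<omega>) \<partial>M) = 0"
      using g by auto
  qed
  have Bim: "integrable M (\<lambda>\<omega>. (Im (\<beta> \<omega>))\<^sup>2)" "(\<integral>\<omega>. (Im (\<beta> \<omega>))\<^sup>2 \<partial>M) = \<alpha> / 2"
      "integrable M (\<lambda>\<omega>. Im (\<beta> \<omega>))" "(\<integral>\<omega>. Im (\<beta> \<omega>) \<partial>M) = 0"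
  proof -
    have "(cmod (x + s *\<^sub>R (\<i> * complex_of_real \<alpha>)))\<^sup>2 / \<alpha> = (cmod x)\<^sup>2 / \<alpha> + 2 * s * Im x + s\<^sup>2 * \<alpha>" for x s
      unfolding cmod_power2 using al by (simp add: field_simps power2_eq_square)
    note g = gauss_moments[OF P B', of Im "\<i> * complex_of_real \<alpha>" \<alpha>, OF _ _ this]
    show "integrable M (\<lambda>\<omega>. (Im (\<beta> \<omega>))\<^sup>2)" "(\<integral>\<omega>. (Im (\<beta> \<omega>))\<^sup>2 \<partial>M) = \<alpha> / 2"
      "integrable M (\<lambda>\<omega>. Im (\<beta> \<omega>))" "(\<integral>\<omega>. Im (\<beta> \<omega>) \<partial>M) = 0"
      using g by auto
  qed
  have scR: "s *\<^sub>R v = complex_of_real s *s v" for s and v :: "complex^'k"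
    by (simp add: vec_eq_iff) (simp add: scaleR_conv_of_real)
  have Zre: "integrable M (\<lambda>\<omega>. (Re (l (z \<omega>)))\<^sup>2)" "(\<integral>\<omega>. (Re (l (z \<omega>)))\<^sup>2 \<partial>M) = \<gamma> / 2"
      "integrable M (\<lambda>\<omega>. Re (l (z \<omega>)))" "(\<integral>\<omega>. Re (l (z \<omega>)) \<partial>M) = 0"
  proof -
    have "q (x + s *\<^sub>R c) = q x + 2 * s * Re (l x) + s\<^sup>2 * \<gamma>" for x s
      unfolding scR qsh by simp
    note g = gauss_moments[OF P Z qm _ this]
    show "integrable M (\<lambda>\<omega>. (Re (l (z \<omega>)))\<^sup>2)" "(\<integral>\<omega>. (Re (l (z \<omega>)))\<^sup>2 \<partial>M) = \<gamma> / 2"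
      "integrable M (\<lambda>\<omega>. Re (l (z \<omega>)))" "(\<integral>\<omega>. Re (l (z \<omega>)) \<partial>M) = 0"
      using g by auto
  qed
  have Zim: "integrable M (\<lambda>\<omega>. (Im (l (z \<omega>)))\<^sup>2)" "(\<integral>\<omega>. (Im (l (z \<omega>)))\<^sup>2 \<partial>M) = \<gamma> / 2"
      "integrable M (\<lambda>\<omega>. Im (l (z \<omega>)))" "(\<integral>\<omega>. Im (l (z \<omega>)) \<partial>M) = 0"
  proof -
    have sc2: "s *\<^sub>R (\<i> *s c) = (\<i> * complex_of_real s) *s c" for s
      by (simp add: vec_eq_iff) (simp add: scaleR_conv_of_real)
    have "q (x + s *\<^sub>R (\<i> *s c)) = q x + 2 * s * Im (l x) + s\<^sup>2 * \<gamma>" for x s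
      unfolding sc2 qsh by (simp add: norm_mult)
    note g = gauss_moments[OF P Z qm _ this]
    show "integrable M (\<lambda>\<omega>. (Im (l (z \<omega>)))\<^sup>2)" "(\<integral>\<omega>. (Im (l (z \<omega>)))\<^sup>2 \<partial>M) = \<gamma> / 2"
      "integrable M (\<lambda>\<omega>. Im (l (z \<omega>)))" "(\<integral>\<omega>. Im (l (z \<omega>)) \<partial>M) = 0"
      using g by auto
  qed
  have g0: "0 \<le> \<gamma>"
  proof -
    have "0 \<le> (\<integral>\<omega>. (Re (l (z \<omega>)))\<^sup>2 \<partial>M)" by (rule integral_nonneg_AE) auto
    then show ?thesis using Zre(2) by simp
  qed
  define Y where "Y = (\<lambda>\<omega>. \<beta> \<omega> *s c + z \<omega>)"
  define \<rho>z where "\<rho>z x = exp (- q x) / D" for x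
  define \<rho>b where "\<rho>b = cn1_density \<alpha>"
  define Pxy where "Pxy p = \<rho>z (fst p - snd p *s c) * \<rho>b (snd p)" for p :: "(complex^'k) \<times> complex"
  define T where "T p = (fst p *s c + snd p, fst p)" for p :: "complex \<times> (complex^'k)"
  have D: "0 < D" using density_pos_const[OF P Z] by simp
  have rbpos: "0 < \<rho>b b" for b using al by (simp add: \<rho>b_def cn1_density_def)
  have rzpos: "0 < \<rho>z x" for x using D by (simp add: \<rho>z_def)
  have rbm[measurable]: "\<rho>b \<in> borel_measurable borel" unfolding \<rho>b_def cn1_density_def[abs_def] by measurable
  have rzm[measurable]: "\<rho>z \<in> borel_measurable borel" unfolding \<rho>z_def[abs_def] by measurable
  have smulm[measurable]: "(\<lambda>b::complex. b *s c) \<in> borel_measurable borel"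
    by (rule borel_measurable_continuous_onI) (intro continuous_intros)
  have Ym[measurable]: "Y \<in> borel_measurable M"
    unfolding Y_def by (rule borel_measurable_add[OF measurable_compose[OF Bm smulm] Zm])
  have Tm1[measurable]: "(\<lambda>p::complex \<times> (complex^'k). fst p *s c + snd p) \<in> borel_measurable (lborel \<Otimes>\<^sub>M lborel)"
    by (rule cont_meas_pair) (intro continuous_intros)
  have Tm[measurable]: "T \<in> measurable (lborel \<Otimes>\<^sub>M lborel) (lborel \<Otimes>\<^sub>M lborel)"
    unfolding T_def by measurable
  have Pm1[measurable]: "(\<lambda>p::(complex^'k) \<times> complex. fst p - snd p *s c) \<in> borel_measurable (lborel \<Otimes>\<^sub>M lborel)"
    by (rule cont_meas_pair) (intro continuous_intros)
  have Pxym[measurable]: "Pxy \<in> borel_measurable (lborel \<Otimes>\<^sub>M lborel)"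
    unfolding Pxy_def[abs_def] by measurable
  have Pxy_nn: "0 \<le> Pxy p" for p using rbpos rzpos by (simp add: Pxy_def less_imp_le)
  have distB: "distr M lborel \<beta> = density lborel (\<lambda>x. ennreal (\<rho>b x))"
    using B by (simp add: distributed_def \<rho>b_def)
  have distZ: "distr M lborel z = density lborel (\<lambda>x. ennreal (\<rho>z x))"
    using Z by (simp add: distributed_def \<rho>z_def)
  have sfZ: "sigma_finite_measure (density lborel (\<lambda>x. ennreal (\<rho>z x)))"
    unfolding distZ[symmetric] by (rule prob_space_imp_sigma_finite, rule prob_space_distr) simp
  have prodBZ: "distr M lborel \<beta> \<Otimes>\<^sub>M distr M lborel z = density (lborel \<Otimes>\<^sub>M lborel) (\<lambda>(b, x). ennreal (\<rho>b b) * ennreal (\<rho>z x))"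
    unfolding distB distZ by (rule pair_measure_density) (auto intro: sfZ sigma_finite_lborel)
  have joint: "distributed M (lborel \<Otimes>\<^sub>M lborel) (\<lambda>\<omega>. (Y \<omega>, \<beta> \<omega>)) (\<lambda>p. ennreal (Pxy p))"
    unfolding distributed_def
  proof (intro conjI)
    show "(\<lambda>p. ennreal (Pxy p)) \<in> borel_measurable (lborel \<Otimes>\<^sub>M lborel)" by measurable
    show "(\<lambda>\<omega>. (Y \<omega>, \<beta> \<omega>)) \<in> measurable M (lborel \<Otimes>\<^sub>M lborel)" by measurable
    show "distr M (lborel \<Otimes>\<^sub>M lborel) (\<lambda>\<omega>. (Y \<omega>, \<beta> \<omega>)) = density (lborel \<Otimes>\<^sub>M lborel) (\<lambda>p. ennreal (Pxy p))"
    proof (rule measure_eqI)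
      fix A assume "A \<in> sets (distr M (lborel \<Otimes>\<^sub>M lborel) (\<lambda>\<omega>. (Y \<omega>, \<beta> \<omega>)))"
      then have A[measurable]: "A \<in> sets (lborel \<Otimes>\<^sub>M lborel)" by simp
      have "emeasure (distr M (lborel \<Otimes>\<^sub>M lborel) (\<lambda>\<omega>. (Y \<omega>, \<beta> \<omega>))) A
          = (\<integral>\<^sup>+p. indicator A p \<partial>(distr M (lborel \<Otimes>\<^sub>M lborel) (\<lambda>\<omega>. (Y \<omega>, \<beta> \<omega>))))"
        by (rule nn_integral_indicator[symmetric]) (use A in simp)
      also have "\<dots> = (\<integral>\<^sup>+\<omega>. indicator A (Y \<omega>, \<beta> \<omega>) \<partial>M)"
        by (rule nn_integral_distr) measurable
      also have "\<dots> = (\<integral>\<^sup>+\<omega>. indicator A (T (\<beta> \<omega>, z \<omega>)) \<partial>M)"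
        by (simp add: Y_def T_def)
      also have "\<dots> = (\<integral>\<^sup>+p. indicator A (T p) \<partial>(distr M (lborel \<Otimes>\<^sub>M lborel) (\<lambda>\<omega>. (\<beta> \<omega>, z \<omega>))))"
        by (rule nn_integral_distr[symmetric]) measurable
      also have "\<dots> = (\<integral>\<^sup>+p. indicator A (T p) \<partial>(density (lborel \<Otimes>\<^sub>M lborel) (\<lambda>(b, x). ennreal (\<rho>b b) * ennreal (\<rho>z x))))"
        by (simp only: ind prodBZ)
      also have "\<dots> = (\<integral>\<^sup>+p. ennreal (\<rho>b (fst p)) * ennreal (\<rho>z (snd p)) * indicator A (T p) \<partial>(lborel \<Otimes>\<^sub>M lborel))"
        by (subst nn_integral_density) (auto simp: split_beta')
      also have "\<dots> = (\<integral>\<^sup>+b. \<integral>\<^sup>+x. ennreal (\<rho>b b) * ennreal (\<rho>z x) * indicator A (T (b, x)) \<partial>lborel \<partial>lborel)"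
      proof -
        have Fm: "(\<lambda>p. ennreal (\<rho>b (fst p)) * ennreal (\<rho>z (snd p)) * indicator A (T p)) \<in> borel_measurable (lborel \<Otimes>\<^sub>M lborel)"
          by measurable
        show ?thesis using lborel.nn_integral_fst[OF Fm] by simp
      qed
      also have "\<dots> = (\<integral>\<^sup>+b. \<integral>\<^sup>+y. ennreal (\<rho>b b) * ennreal (\<rho>z (y - b *s c)) * indicator A (y, b) \<partial>lborel \<partial>lborel)"
      proof (rule nn_integral_cong)
        fix b :: complex
        have "(\<integral>\<^sup>+y. ennreal (\<rho>b b) * ennreal (\<rho>z (y - b *s c)) * indicator A (y, b) \<partial>lborel)
            = (\<integral>\<^sup>+x. ennreal (\<rho>b b) * ennreal (\<rho>z ((b *s c + x) - b *s c)) * indicator A (b *s c + x, b) \<partial>lborel)"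
          by (rule nn_integral_shift[symmetric, where f="\<lambda>y. ennreal (\<rho>b b) * ennreal (\<rho>z (y - b *s c)) * indicator A (y, b)"]) measurable
        then show "(\<integral>\<^sup>+x. ennreal (\<rho>b b) * ennreal (\<rho>z x) * indicator A (T (b, x)) \<partial>lborel)
            = (\<integral>\<^sup>+y. ennreal (\<rho>b b) * ennreal (\<rho>z (y - b *s c)) * indicator A (y, b) \<partial>lborel)"
          by (simp add: T_def)
      qed
      also have "\<dots> = (\<integral>\<^sup>+p. ennreal (\<rho>b (snd p)) * ennreal (\<rho>z (fst p - snd p *s c)) * indicator A p \<partial>(lborel \<Otimes>\<^sub>M lborel))"
        by (rule lborel_pair.nn_integral_snd[where f="\<lambda>p. ennreal (\<rho>b (snd p)) * ennreal (\<rho>z (fst p - snd p *s c)) * indicator A p", simplified]) measurable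
      also have "\<dots> = (\<integral>\<^sup>+p. ennreal (Pxy p) * indicator A p \<partial>(lborel \<Otimes>\<^sub>M lborel))"
        using rbpos rzpos by (intro nn_integral_cong) (simp add: Pxy_def ennreal_mult less_imp_le mult.commute)
      also have "\<dots> = emeasure (density (lborel \<Otimes>\<^sub>M lborel) (\<lambda>p. ennreal (Pxy p))) A"
        by (rule emeasure_density[symmetric]) (auto simp del: sets_lborel intro: A)
      finally show "emeasure (distr M (lborel \<Otimes>\<^sub>M lborel) (\<lambda>\<omega>. (Y \<omega>, \<beta> \<omega>))) A = emeasure (density (lborel \<Otimes>\<^sub>M lborel) (\<lambda>p. ennreal (Pxy p))) A" .
    qed simp
  qed
  have ag: "0 < 1 + \<alpha> * \<gamma>" using al g0 by (simp add: add_pos_nonneg)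
  define a where "a = \<alpha> / (1 + \<alpha> * \<gamma>)"
  have a0: "0 < a" using al ag by (simp add: a_def)
  have ainv: "\<gamma> + 1 / \<alpha> = 1 / a" using al ag by (simp add: a_def field_simps)
  have normB: "(\<integral>\<^sup>+b. ennreal (exp (- (cmod b)\<^sup>2 / \<alpha>)) \<partial>lborel) = ennreal (pi * \<alpha>)"
  proof -
    have I: "(\<integral>\<^sup>+b. ennreal (exp (- (cmod b)\<^sup>2 / \<alpha>) / (pi * \<alpha>)) \<partial>lborel) = 1"
      using density_pos_const(2)[OF P B[unfolded cn1_density_def]] by simp
    have "(\<integral>\<^sup>+b. ennreal (exp (- (cmod b)\<^sup>2 / \<alpha>)) \<partial>lborel)
        = (\<integral>\<^sup>+b. ennreal (pi * \<alpha>) * ennreal (exp (- (cmod b)\<^sup>2 / \<alpha>) / (pi * \<alpha>)) \<partial>lborel)"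
      using al by (intro nn_integral_cong) (simp add: ennreal_mult[symmetric])
    also have "\<dots> = ennreal (pi * \<alpha>) * (\<integral>\<^sup>+b. ennreal (exp (- (cmod b)\<^sup>2 / \<alpha>) / (pi * \<alpha>)) \<partial>lborel)"
      by (rule nn_integral_cmult) auto
    finally show ?thesis using I by simp
  qed
  define \<rho>Y where "\<rho>Y y = exp (- q y) / D * exp (a * (cmod (l y))\<^sup>2) / (1 + \<alpha> * \<gamma>)" for y
  have rYpos: "0 < \<rho>Y y" for y using D ag by (simp add: \<rho>Y_def)
  have qminus: "q (y - b *s c) = q y - 2 * Re (cnj b * l y) + (cmod b)\<^sup>2 * \<gamma>" for y b
  proof -
    have "y - b *s c = y + (- b) *s c" by (simp add: vec_eq_iff)
    then show ?thesis using qsh[of y "- b"] by simp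
  qed
  have Pxy_eq: "Pxy (y, b) = exp (- q y) / (D * (pi * \<alpha>)) * exp (2 * Re (cnj b * l y) - (cmod b)\<^sup>2 / a)" for y b
  proof -
    have "- q (y - b *s c) - (cmod b)\<^sup>2 / \<alpha> = - q y + (2 * Re (cnj b * l y) - (cmod b)\<^sup>2 / a)"
    proof -
      have "(cmod b)\<^sup>2 / a = (cmod b)\<^sup>2 * (1 / a)" by simp
      also have "\<dots> = (cmod b)\<^sup>2 * (\<gamma> + 1 / \<alpha>)" by (simp only: ainv)
      also have "\<dots> = (cmod b)\<^sup>2 * \<gamma> + (cmod b)\<^sup>2 / \<alpha>" by (simp add: algebra_simps)
      finally have e1: "(cmod b)\<^sup>2 / a = (cmod b)\<^sup>2 * \<gamma> + (cmod b)\<^sup>2 / \<alpha>" .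
      show ?thesis unfolding qminus e1 by simp
    qed
    then have "exp (- q (y - b *s c)) * exp (- (cmod b)\<^sup>2 / \<alpha>) = exp (- q y) * exp (2 * Re (cnj b * l y) - (cmod b)\<^sup>2 / a)"
      by (simp add: exp_add[symmetric])
    then show ?thesis by (simp add: Pxy_def \<rho>z_def \<rho>b_def cn1_density_def)
  qed
  have marg: "(\<integral>\<^sup>+b. ennreal (Pxy (y, b)) \<partial>lborel) = ennreal (\<rho>Y y)" for y
  proof -
    have "(\<integral>\<^sup>+b. ennreal (Pxy (y, b)) \<partial>lborel)
        = (\<integral>\<^sup>+b. ennreal (exp (- q y) / (D * (pi * \<alpha>))) * ennreal (exp (2 * Re (cnj b * l y) - (cmod b)\<^sup>2 / a)) \<partial>lborel)"
      using D al by (intro nn_integral_cong) (simp add: Pxy_eq ennreal_mult[symmetric])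
    also have "\<dots> = ennreal (exp (- q y) / (D * (pi * \<alpha>))) * (\<integral>\<^sup>+b. ennreal (exp (2 * Re (cnj b * l y) - (cmod b)\<^sup>2 / a)) \<partial>lborel)"
      by (rule nn_integral_cmult) auto
    also have "\<dots> = ennreal (exp (- q y) / (D * (pi * \<alpha>))) * ennreal (pi * a * exp (a * (cmod (l y))\<^sup>2))"
      by (simp only: cgauss_int[OF al a0 normB])
    also have "\<dots> = ennreal (exp (- q y) / (D * (pi * \<alpha>)) * (pi * a * exp (a * (cmod (l y))\<^sup>2)))"
      using D al a0 by (simp add: ennreal_mult[symmetric])
    also have "exp (- q y) / (D * (pi * \<alpha>)) * (pi * a * exp (a * (cmod (l y))\<^sup>2)) = \<rho>Y y"
      using D al ag by (simp add: \<rho>Y_def a_def field_simps)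
    finally show ?thesis .
  qed
  have Ydist: "distributed M lborel Y (\<lambda>y. ennreal (\<rho>Y y))"
    using distr_marginal1[OF sigma_finite_lborel sigma_finite_lborel joint] by (simp add: marg)
  have Bdist: "distributed M lborel \<beta> (\<lambda>b. ennreal (\<rho>b b))" using B by (simp add: \<rho>b_def)
  have MI: "mutual_information 2 lborel lborel Y \<beta>
      = (\<integral>p. Pxy p * log 2 (Pxy p / (\<rho>Y (fst p) * \<rho>b (snd p))) \<partial>(lborel \<Otimes>\<^sub>M lborel))"
    by (rule mutual_information_distr[OF sigma_finite_lborel sigma_finite_lborel Ydist _ Bdist _ joint])
       (auto intro: less_imp_le rYpos rbpos Pxy_nn)
  have ln2: "0 < ln (2::real)" by simp
  define H where "H p = log 2 (1 + \<alpha> * \<gamma>) + (2 * Re (cnj (snd p) * l (fst p)) - (cmod (snd p))\<^sup>2 * \<gamma> - a * (cmod (l (fst p)))\<^sup>2) / ln 2"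
    for p :: "(complex^'k) \<times> complex"
  have Hpt: "log 2 (Pxy p / (\<rho>Y (fst p) * \<rho>b (snd p))) = H p" for p
  proof (cases p)
    case (Pair y b)
    define E where "E = 2 * Re (cnj b * l y) - (cmod b)\<^sup>2 * \<gamma>"
    have e1: "exp (- q (y - b *s c)) = exp (- q y) * exp E"
      by (simp add: qminus E_def exp_add[symmetric])
    have r: "Pxy (y, b) / (\<rho>Y y * \<rho>b b) = (1 + \<alpha> * \<gamma>) * exp (E - a * (cmod (l y))\<^sup>2)"
      using rbpos[of b] D ag
      by (simp add: Pxy_def \<rho>z_def \<rho>Y_def e1 exp_diff field_simps)
    have "log 2 (Pxy (y, b) / (\<rho>Y y * \<rho>b b)) = log 2 (1 + \<alpha> * \<gamma>) + log 2 (exp (E - a * (cmod (l y))\<^sup>2))"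
      unfolding r using ag by (simp add: log_mult)
    then show ?thesis by (simp add: Pair H_def E_def)
  qed
  have Hm[measurable]: "H \<in> borel_measurable (lborel \<Otimes>\<^sub>M lborel)"
  proof -
    have lfc: "continuous_on UNIV (\<lambda>p::(complex^'k) \<times> complex. l (fst p))"
      by (rule continuous_on_compose2[OF lc continuous_on_fst[OF continuous_on_id]]) auto
    have "continuous_on UNIV H" unfolding H_def[abs_def] using ln2 by (intro continuous_intros lfc) auto
    then show ?thesis by (rule cont_meas_pair)
  qed
  have "mutual_information 2 lborel lborel Y \<beta> = (\<integral>p. Pxy p * H p \<partial>(lborel \<Otimes>\<^sub>M lborel))"
    unfolding MI Hpt ..
  also have "\<dots> = (\<integral>\<omega>. H (Y \<omega>, \<beta> \<omega>) \<partial>M)"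
    by (rule distributed_integral[OF joint Hm]) (rule Pxy_nn)
  finally have MI2: "mutual_information 2 lborel lborel Y \<beta> = (\<integral>\<omega>. H (Y \<omega>, \<beta> \<omega>) \<partial>M)" .
  define k1 where "k1 = (\<gamma> - a * \<gamma>\<^sup>2) / ln 2"
  define k2 where "k2 = (2 - 2 * a * \<gamma>) / ln 2"
  define k3 where "k3 = a / ln 2"
  define C0 where "C0 = log 2 (1 + \<alpha> * \<gamma>)"
  have HY: "H (Y \<omega>, \<beta> \<omega>) = C0 + k1 * (Re (\<beta> \<omega>))\<^sup>2 + k1 * (Im (\<beta> \<omega>))\<^sup>2
      + k2 * (Re (\<beta> \<omega>) * Re (l (z \<omega>))) + k2 * (Im (\<beta> \<omega>) * Im (l (z \<omega>)))
      - k3 * (Re (l (z \<omega>)))\<^sup>2 - k3 * (Im (l (z \<omega>)))\<^sup>2" for \<omega>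
  proof -
    have lY: "l (Y \<omega>) = l (z \<omega>) + \<beta> \<omega> * \<gamma>"
      unfolding Y_def using lsh[of "z \<omega>" "\<beta> \<omega>"] by (simp add: add.commute)
    show ?thesis
      unfolding H_def fst_conv snd_conv lY k1_def k2_def k3_def C0_def cmod_power2
      using ln2 by (simp add: field_simps power2_eq_square)
  qed
  have ind1: "indep_var borel (\<lambda>\<omega>. Re (\<beta> \<omega>)) borel (\<lambda>\<omega>. Re (l (z \<omega>)))"
    by (rule indep_from_distr[OF P Bm Zm ind]) measurable
  have ind2: "indep_var borel (\<lambda>\<omega>. Im (\<beta> \<omega>)) borel (\<lambda>\<omega>. Im (l (z \<omega>)))"
    by (rule indep_from_distr[OF P Bm Zm ind]) measurable
  have h3: "has_bochner_integral M (\<lambda>\<omega>. Re (\<beta> \<omega>) * Re (l (z \<omega>))) 0"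
    using indep_var_lebesgue_integral[OF ind1 Bre(3) Zre(3)] indep_var_integrable[OF ind1 Bre(3) Zre(3)] Bre(4) Zre(4)
    by (simp add: has_bochner_integral_iff)
  have h4: "has_bochner_integral M (\<lambda>\<omega>. Im (\<beta> \<omega>) * Im (l (z \<omega>))) 0"
    using indep_var_lebesgue_integral[OF ind2 Bim(3) Zim(3)] indep_var_integrable[OF ind2 Bim(3) Zim(3)] Bim(4) Zim(4)
    by (simp add: has_bochner_integral_iff)
  have h1: "has_bochner_integral M (\<lambda>\<omega>. (Re (\<beta> \<omega>))\<^sup>2) (\<alpha>/2)" using Bre by (simp add: has_bochner_integral_iff)
  have h2: "has_bochner_integral M (\<lambda>\<omega>. (Im (\<beta> \<omega>))\<^sup>2) (\<alpha>/2)" using Bim by (simp add: has_bochner_integral_iff)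
  have h5: "has_bochner_integral M (\<lambda>\<omega>. (Re (l (z \<omega>)))\<^sup>2) (\<gamma>/2)" using Zre by (simp add: has_bochner_integral_iff)
  have h6: "has_bochner_integral M (\<lambda>\<omega>. (Im (l (z \<omega>)))\<^sup>2) (\<gamma>/2)" using Zim by (simp add: has_bochner_integral_iff)
  have hc: "has_bochner_integral M (\<lambda>_. C0) C0" by (simp add: has_bochner_integral_iff prob_space)
  have hall: "has_bochner_integral M (\<lambda>\<omega>. C0 + k1 * (Re (\<beta> \<omega>))\<^sup>2 + k1 * (Im (\<beta> \<omega>))\<^sup>2
      + k2 * (Re (\<beta> \<omega>) * Re (l (z \<omega>))) + k2 * (Im (\<beta> \<omega>) * Im (l (z \<omega>)))
      - k3 * (Re (l (z \<omega>)))\<^sup>2 - k3 * (Im (l (z \<omega>)))\<^sup>2)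
      (C0 + k1 * (\<alpha>/2) + k1 * (\<alpha>/2) + k2 * 0 + k2 * 0 - k3 * (\<gamma>/2) - k3 * (\<gamma>/2))"
    by (intro has_bochner_integral_add has_bochner_integral_diff has_bochner_integral_mult_right hc h1 h2 h3 h4 h5 h6)
  have fin: "C0 + k1 * (\<alpha>/2) + k1 * (\<alpha>/2) + k2 * 0 + k2 * 0 - k3 * (\<gamma>/2) - k3 * (\<gamma>/2) = C0"
  proof -
    have "(\<gamma> - a * \<gamma>\<^sup>2) * \<alpha> - a * \<gamma> = 0"
      using ag by (simp add: a_def field_simps power2_eq_square)
    then show ?thesis using ln2 by (simp add: k1_def k3_def field_simps)
  qed
  have "mutual_information 2 lborel lborel Y \<beta> = C0"
    unfolding MI2 HY using hall fin by (simp add: has_bochner_integral_iff)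
  then show ?thesis by (simp add: Y_def C0_def)
qed



definition bil :: "complex^'m \<Rightarrow> complex^'m^'m \<Rightarrow> complex^'m \<Rightarrow> complex" where
  "bil y A x = (\<Sum>i\<in>UNIV. \<Sum>j\<in>UNIV. cnj (y$i) * (A$i$j) * (x$j))"

definition hermitian_mat :: "complex^'m^'m \<Rightarrow> bool" where
  "hermitian_mat A \<longleftrightarrow> (\<forall>i j. cnj (A$j$i) = A$i$j)"

lemma herm_form_bil: "herm_form x A = bil x A x"
  by (simp add: herm_form_def bil_def)

lemma bil_add_left: "bil (x + y) A z = bil x A z + bil y A z"
  by (simp add: bil_def sum.distrib[symmetric] algebra_simps)

lemma bil_add_right: "bil y A (x + z) = bil y A x + bil y A z"
  by (simp add: bil_def sum.distrib[symmetric] algebra_simps)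

lemma bil_smult_left: "bil (b *s y) A x = cnj b * bil y A x"
  by (simp add: bil_def sum_distrib_left algebra_simps)

lemma bil_smult_right: "bil y A (b *s x) = b * bil y A x"
  by (simp add: bil_def sum_distrib_left algebra_simps)

lemma bil_herm:
  assumes "hermitian_mat A"
  shows "bil x A y = cnj (bil y A x)"
proof -
  have "cnj (bil y A x) = (\<Sum>i\<in>UNIV. \<Sum>j\<in>UNIV. y$i * cnj (A$i$j) * cnj (x$j))"
    by (simp add: bil_def cnj_sum)
  also have "\<dots> = (\<Sum>j\<in>UNIV. \<Sum>i\<in>UNIV. y$i * cnj (A$i$j) * cnj (x$j))"
    by (rule sum.swap)
  also have "\<dots> = bil x A y"
    using assms unfolding hermitian_mat_def bil_def
    by (intro sum.cong refl) (simp add: algebra_simps)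
  finally show ?thesis ..
qed

lemma herm_shift:
  assumes "hermitian_mat A"
  shows "Re (herm_form (x + b *s c) A) = Re (herm_form x A) + 2 * Re (cnj b * bil c A x) + (cmod b)\<^sup>2 * Re (herm_form c A)"
    and "bil c A (x + b *s c) = bil c A x + b * complex_of_real (Re (herm_form c A))"
proof -
  have hc: "herm_form c A = complex_of_real (Re (herm_form c A))"
    using bil_herm[OF assms, of c c] unfolding herm_form_bil
    by (metis Reals_cnj_iff complex_is_Real_iff of_real_Re)
  have "herm_form (x + b *s c) A = herm_form x A + b * bil x A c + cnj b * bil c A x + cnj b * b * herm_form c A"
    unfolding herm_form_bil by (simp add: bil_add_left bil_add_right bil_smult_left bil_smult_right algebra_simps)
  moreover have "bil x A c = cnj (bil c A x)" by (rule bil_herm[OF assms])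
  moreover have "Re (b * cnj (bil c A x)) = Re (cnj b * bil c A x)" by simp
  moreover have "Re (cnj b * b * herm_form c A) = (cmod b)\<^sup>2 * Re (herm_form c A)"
    by (subst hc) (simp add: complex_norm_square[symmetric] mult.commute)
  ultimately show "Re (herm_form (x + b *s c) A) = Re (herm_form x A) + 2 * Re (cnj b * bil c A x) + (cmod b)\<^sup>2 * Re (herm_form c A)"
    by simp
  show "bil c A (x + b *s c) = bil c A x + b * complex_of_real (Re (herm_form c A))"
    using hc by (simp add: bil_add_right bil_smult_right herm_form_bil)
qed

lemma continuous_herm: "continuous_on UNIV (\<lambda>x. Re (herm_form x A))"
  unfolding herm_form_def by (intro continuous_intros)

lemma continuous_bil: "continuous_on UNIV (\<lambda>x. bil c A x)"
  unfolding bil_def by (intro continuous_intros)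

lemma sum_prod_UNIV:
  fixes f :: "('a::finite \<times> 'b::finite) \<Rightarrow> 'c::comm_monoid_add"
  shows "(\<Sum>r\<in>UNIV. f r) = (\<Sum>r1\<in>UNIV. \<Sum>r2\<in>UNIV. f (r1, r2))"
  by (simp add: sum.cartesian_product UNIV_Times_UNIV[symmetric] del: UNIV_Times_UNIV)

lemma kron_mult:
  fixes A B :: "complex^'n::finite^'n"
  shows "(kron_eye A :: complex^('l::finite \<times> 'n)^('l \<times> 'n)) ** kron_eye B = kron_eye (A ** B)"
proof -
  have "(kron_eye A ** kron_eye B :: complex^('l \<times> 'n)^('l \<times> 'n)) $ p $ q = kron_eye (A ** B) $ p $ q" for p q
  proof -
    have "(kron_eye A ** kron_eye B :: complex^('l \<times> 'n)^('l \<times> 'n)) $ p $ q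
        = (\<Sum>r1\<in>UNIV. \<Sum>r2\<in>UNIV. (if fst p = r1 then A$(snd p)$r2 else 0) * (if r1 = fst q then B$r2$(snd q) else 0))"
      unfolding matrix_matrix_mult_def kron_eye_def by (subst sum_prod_UNIV) (simp only: snd_conv fst_conv vec_lambda_beta)
    also have "\<dots> = (\<Sum>r1\<in>UNIV. if r1 = fst p then (if r1 = fst q then (\<Sum>r2\<in>UNIV. A$(snd p)$r2 * B$r2$(snd q)) else 0) else 0)"
      by (intro sum.cong refl) auto
    also have "\<dots> = kron_eye (A ** B) $ p $ q"
      by (simp add: kron_eye_def matrix_matrix_mult_def)
    finally show ?thesis .
  qed
  then show ?thesis by (simp add: vec_eq_iff)
qed

lemma kron_mat1: "(kron_eye (mat 1 :: complex^'n::finite^'n) :: complex^('l::finite \<times> 'n)^('l \<times> 'n)) = mat 1"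
  by (simp add: vec_eq_iff kron_eye_def mat_def prod_eq_iff)

lemma rank1_inv:
  fixes h :: "complex^'n::finite" and pc :: real
  assumes pc: "0 < pc"
  defines "N \<equiv> (\<Sum>i\<in>UNIV. (cmod (h$i))\<^sup>2)"
  defines "\<kappa> \<equiv> pc / (1 + pc * N)"
  shows "((\<chi> i i'. complex_of_real pc * h$i * cnj (h$i')) + mat 1) ** (mat 1 - (\<chi> i j. complex_of_real \<kappa> * h$i * cnj (h$j))) = mat 1"
proof -
  have N0: "0 \<le> N" unfolding N_def by (intro sum_nonneg) auto
  have d: "0 < 1 + pc * N" using pc N0 by (simp add: add_pos_nonneg)
  have kap: "pc - \<kappa> - pc * \<kappa> * N = 0" using d unfolding \<kappa>_def
    by (simp add: field_simps)
  have S: "(\<Sum>k\<in>UNIV. cnj (h$k) * h$k) = complex_of_real N"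
    unfolding N_def of_real_sum by (intro sum.cong refl) (simp add: complex_norm_square mult.commute del: of_real_power)
  have "(((\<chi> i i'. complex_of_real pc * h$i * cnj (h$i')) + mat 1) ** (mat 1 - (\<chi> i j. complex_of_real \<kappa> * h$i * cnj (h$j)))) $ i $ j = mat 1 $ i $ j" for i j
  proof -
    have "(((\<chi> i i'. complex_of_real pc * h$i * cnj (h$i')) + mat 1) ** (mat 1 - (\<chi> i j. complex_of_real \<kappa> * h$i * cnj (h$j)))) $ i $ j
       = (\<Sum>k\<in>UNIV. (complex_of_real pc * h$i * cnj (h$k) + (if i = k then 1 else 0)) * ((if k = j then 1 else 0) - complex_of_real \<kappa> * h$k * cnj (h$j)))"
      by (simp add: matrix_matrix_mult_def mat_def)
    also have "\<dots> = (\<Sum>k\<in>UNIV. (if k = j then complex_of_real pc * h$i * cnj (h$k) else 0))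
        - complex_of_real pc * complex_of_real \<kappa> * h$i * cnj (h$j) * (\<Sum>k\<in>UNIV. cnj (h$k) * h$k)
        + (\<Sum>k\<in>UNIV. (if k = j then (if i = k then 1 else 0) else 0))
        - (\<Sum>k\<in>UNIV. (if i = k then complex_of_real \<kappa> * h$k * cnj (h$j) else 0))"
    proof -
      have "(\<Sum>k\<in>UNIV. (complex_of_real pc * h$i * cnj (h$k) + (if i = k then 1 else 0)) * ((if k = j then 1 else 0) - complex_of_real \<kappa> * h$k * cnj (h$j)))
          = (\<Sum>k\<in>UNIV. (if k = j then complex_of_real pc * h$i * cnj (h$k) else 0)
              - complex_of_real pc * complex_of_real \<kappa> * h$i * cnj (h$j) * (cnj (h$k) * h$k)
              + (if k = j then (if i = k then 1 else 0) else 0)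
              - (if i = k then complex_of_real \<kappa> * h$k * cnj (h$j) else 0))"
        by (intro sum.cong refl) (auto simp: algebra_simps)
      also have "\<dots> = (\<Sum>k\<in>UNIV. (if k = j then complex_of_real pc * h$i * cnj (h$k) else 0))
        - (\<Sum>k\<in>UNIV. complex_of_real pc * complex_of_real \<kappa> * h$i * cnj (h$j) * (cnj (h$k) * h$k))
        + (\<Sum>k\<in>UNIV. (if k = j then (if i = k then 1 else 0) else 0))
        - (\<Sum>k\<in>UNIV. (if i = k then complex_of_real \<kappa> * h$k * cnj (h$j) else 0))"
        by (simp only: sum.distrib sum_subtractf)
      also have "(\<Sum>k\<in>UNIV. complex_of_real pc * complex_of_real \<kappa> * h$i * cnj (h$j) * (cnj (h$k) * h$k))
          = complex_of_real pc * complex_of_real \<kappa> * h$i * cnj (h$j) * (\<Sum>k\<in>UNIV. cnj (h$k) * h$k)"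
        by (simp only: sum_distrib_left)
      finally show ?thesis .
    qed
    also have "\<dots> = complex_of_real pc * h$i * cnj (h$j) - complex_of_real (pc * \<kappa> * N) * h$i * cnj (h$j)
        + (if i = j then 1 else 0) - complex_of_real \<kappa> * h$i * cnj (h$j)"
      by (simp add: S)
    also have "\<dots> = complex_of_real (pc - \<kappa> - pc * \<kappa> * N) * h$i * cnj (h$j) + (if i = j then 1 else 0)"
      by (simp add: algebra_simps)
    also have "\<dots> = mat 1 $ i $ j" by (simp add: kap mat_def)
    finally show ?thesis .
  qed
  then show ?thesis by (simp add: vec_eq_iff)
qed

lemma matrix_inv_eq:
  fixes S B :: "complex^'m::finite^'m"
  assumes SB: "S ** B = mat 1"
  shows "matrix_inv S = B"
proof -
  have BS: "B ** S = mat 1" using SB matrix_left_right_inverse1 by blast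
  have uniq: "A' = B" if "S ** A' = mat 1 \<and> A' ** S = mat 1" for A'
  proof -
    have "A' = A' ** (S ** B)" by (simp add: SB)
    also have "\<dots> = (A' ** S) ** B" by (simp add: matrix_mul_assoc)
    also have "\<dots> = B" using that by simp
    finally show ?thesis .
  qed
  show ?thesis unfolding matrix_inv_def
  proof (rule some_equality)
    show "S ** B = mat 1 \<and> B ** S = mat 1" using SB BS by blast
  qed (rule uniq)
qed

lemma hermitian_kron:
  fixes A :: "complex^'n::finite^'n"
  assumes "hermitian_mat A"
  shows "hermitian_mat (kron_eye A :: complex^('l::finite \<times> 'n)^('l \<times> 'n))"
  using assms by (auto simp: hermitian_mat_def kron_eye_def)

lemma hermitian_rank1:
  fixes h :: "complex^'n::finite"
  shows "hermitian_mat (mat 1 - (\<chi> i j. complex_of_real k * h$i * cnj (h$j)))"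
  unfolding hermitian_mat_def
proof (intro allI)
  fix i j
  show "cnj ((mat 1 - (\<chi> i j. complex_of_real k * h$i * cnj (h$j))) $ j $ i) = (mat 1 - (\<chi> i j. complex_of_real k * h$i * cnj (h$j))) $ i $ j"
    by (cases "i = j") (simp_all add: mat_def)
qed

lemma herm_form_kron:
  fixes u :: "complex^'l::finite" and v :: "complex^'n::finite" and A :: "complex^'n^'n"
  shows "herm_form ((\<chi> p. u$(fst p) * v$(snd p)) :: complex^('l \<times> 'n)) (kron_eye A)
       = complex_of_real (\<Sum>l\<in>UNIV. (cmod (u$l))\<^sup>2) * herm_form v A"
proof -
  have "herm_form ((\<chi> p. u$(fst p) * v$(snd p)) :: complex^('l \<times> 'n)) (kron_eye A)
      = (\<Sum>p1\<in>UNIV. \<Sum>p2\<in>UNIV. \<Sum>q1\<in>UNIV. \<Sum>q2\<in>UNIV.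
          cnj (u$p1 * v$p2) * (if p1 = q1 then A$p2$q2 else 0) * (u$q1 * v$q2))"
    unfolding herm_form_def kron_eye_def
    by (subst sum_prod_UNIV, subst sum_prod_UNIV) (simp only: snd_conv fst_conv vec_lambda_beta)
  also have "\<dots> = (\<Sum>p1\<in>UNIV. \<Sum>p2\<in>UNIV. \<Sum>q2\<in>UNIV. cnj (u$p1 * v$p2) * A$p2$q2 * (u$p1 * v$q2))"
  proof (intro sum.cong refl)
    fix p1 p2
    have "(\<Sum>q1\<in>UNIV. \<Sum>q2\<in>UNIV. cnj (u$p1 * v$p2) * (if p1 = q1 then A$p2$q2 else 0) * (u$q1 * v$q2))
        = (\<Sum>q1\<in>UNIV. if q1 = p1 then (\<Sum>q2\<in>UNIV. cnj (u$p1 * v$p2) * A$p2$q2 * (u$q1 * v$q2)) else 0)"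
      by (intro sum.cong refl) auto
    also have "\<dots> = (\<Sum>q2\<in>UNIV. cnj (u$p1 * v$p2) * A$p2$q2 * (u$p1 * v$q2))"
      by simp
    finally show "(\<Sum>q1\<in>UNIV. \<Sum>q2\<in>UNIV. cnj (u$p1 * v$p2) * (if p1 = q1 then A$p2$q2 else 0) * (u$q1 * v$q2))
        = (\<Sum>q2\<in>UNIV. cnj (u$p1 * v$p2) * A$p2$q2 * (u$p1 * v$q2))" .
  qed
  also have "\<dots> = (\<Sum>p1\<in>UNIV. (cnj (u$p1) * u$p1) * herm_form v A)"
  proof (rule sum.cong[OF refl])
    fix p1
    have "(\<Sum>p2\<in>UNIV. \<Sum>q2\<in>UNIV. cnj (u$p1 * v$p2) * A$p2$q2 * (u$p1 * v$q2))
        = (\<Sum>p2\<in>UNIV. \<Sum>q2\<in>UNIV. (cnj (u$p1) * u$p1) * (cnj (v$p2) * A$p2$q2 * v$q2))"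
      by (intro sum.cong refl) (simp add: algebra_simps)
    also have "\<dots> = (cnj (u$p1) * u$p1) * herm_form v A"
      unfolding herm_form_def by (simp add: sum_distrib_left)
    finally show "(\<Sum>p2\<in>UNIV. \<Sum>q2\<in>UNIV. cnj (u$p1 * v$p2) * A$p2$q2 * (u$p1 * v$q2)) = (cnj (u$p1) * u$p1) * herm_form v A" .
  qed
  also have "\<dots> = complex_of_real (\<Sum>l\<in>UNIV. (cmod (u$l))\<^sup>2) * herm_form v A"
    unfolding of_real_sum sum_distrib_right
    by (intro sum.cong refl) (simp add: complex_norm_square mult.commute del: of_real_power)
  finally show ?thesis .
qed

lemma herm_form_rank1:
  fixes v h :: "complex^'n::finite"
  shows "herm_form v (mat 1 - (\<chi> i j. complex_of_real k * h$i * cnj (h$j)))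
     = complex_of_real ((\<Sum>i\<in>UNIV. (cmod (v$i))\<^sup>2) - k * (cmod (\<Sum>i\<in>UNIV. cnj (v$i) * h$i))\<^sup>2)"
proof -
  have "herm_form v (mat 1 - (\<chi> i j. complex_of_real k * h$i * cnj (h$j)))
      = (\<Sum>i\<in>UNIV. \<Sum>j\<in>UNIV. (if i = j then cnj (v$i) * v$j else 0) - complex_of_real k * (cnj (v$i) * h$i) * (cnj (h$j) * v$j))"
    unfolding herm_form_def by (intro sum.cong refl) (simp add: mat_def algebra_simps)
  also have "\<dots> = (\<Sum>i\<in>UNIV. \<Sum>j\<in>UNIV. (if i = j then cnj (v$i) * v$j else 0)) - (\<Sum>i\<in>UNIV. \<Sum>j\<in>UNIV. complex_of_real k * ((cnj (v$i) * h$i) * (cnj (h$j) * v$j)))"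
    by (simp only: sum_subtractf mult.assoc)
  also have "(\<Sum>i\<in>UNIV. \<Sum>j\<in>UNIV. (if i = j then cnj (v$i) * v$j else 0)) = (\<Sum>i\<in>UNIV. cnj (v$i) * v$i)"
    by simp
  also have "(\<Sum>i\<in>UNIV. \<Sum>j\<in>UNIV. complex_of_real k * ((cnj (v$i) * h$i) * (cnj (h$j) * v$j)))
      = complex_of_real k * ((\<Sum>i\<in>UNIV. cnj (v$i) * h$i) * (\<Sum>j\<in>UNIV. cnj (h$j) * v$j))"
    by (simp only: sum_product) (simp add: sum_distrib_left)
  also have "(\<Sum>j\<in>UNIV. cnj (h$j) * v$j) = cnj (\<Sum>i\<in>UNIV. cnj (v$i) * h$i)"
    by (simp add: cnj_sum mult.commute)
  also have "(\<Sum>i\<in>UNIV. cnj (v$i) * h$i) * cnj (\<Sum>i\<in>UNIV. cnj (v$i) * h$i) = complex_of_real ((cmod (\<Sum>i\<in>UNIV. cnj (v$i) * h$i))\<^sup>2)"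
    by (simp add: complex_norm_square del: of_real_power)
  also have "(\<Sum>i\<in>UNIV. cnj (v$i) * v$i) = complex_of_real (\<Sum>i\<in>UNIV. (cmod (v$i))\<^sup>2)"
    unfolding of_real_sum by (intro sum.cong refl) (simp add: complex_norm_square mult.commute del: of_real_power)
  finally show ?thesis by simp
qed



lemma norm_vec_sq: "(norm (x :: complex^'n::finite))\<^sup>2 = (\<Sum>i\<in>UNIV. (cmod (x$i))\<^sup>2)"
  by (simp add: power2_norm_eq_inner inner_vec_def)

theorem theorem7:
  fixes M :: "'w measure"
    and pc ps \<alpha>s :: real
    and hc hs :: "complex^'n::finite"
    and ss :: "complex^'l::finite"
    and \<beta> :: "'w \<Rightarrow> complex"
    and zc :: "'w \<Rightarrow> complex^('l \<times> 'n)"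
  assumes "pc > 0" and "ps > 0" and "\<alpha>s > 0"
    and "hs \<noteq> 0"
    and "(norm ss)^2 / real CARD('l) = 1"
    and "prob_space M"
    and "distributed M lborel \<beta> (\<lambda>x. ennreal (cn1_density \<alpha>s x))"
    and "distributed M lborel zc
           (\<lambda>x. ennreal (cn_density
              (kron_eye ((\<chi> i i'. complex_of_real pc * hc$i * cnj (hc$i'))
                          + mat 1 :: complex^'n^'n)) x))"
    and "distr M (lborel \<Otimes>\<^sub>M lborel) (\<lambda>\<omega>. (\<beta> \<omega>, zc \<omega>))
           = distr M lborel \<beta> \<Otimes>\<^sub>M distr M lborel zc"
  shows "let w = (\<chi> i. cnj (hs$i) / complex_of_real (norm hs));
             G = outerH ((\<chi> i. hs$i * (\<Sum>k\<in>UNIV. hs$k * w$k)) :: complex^'n) ss;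
             Y = (\<lambda>\<omega>. (complex_of_real (sqrt ps) * \<beta> \<omega>) *s cvec G + zc \<omega>)
         in prob_space.mutual_information M 2 lborel lborel Y \<beta> / real CARD('l)
            = log 2 (1 + ps * real CARD('l) * \<alpha>s * (norm hs)^2 *
                ((norm hs)^2 - pc * (cmod (\<Sum>i\<in>UNIV. cnj (hs$i) * hc$i))^2
                                / (1 + pc * (norm hc)^2))) / real CARD('l)"
proof -
  note pc = assms(1) and ps = assms(2) and al = assms(3) and hs0 = assms(4) and ssn = assms(5)
    and P = assms(6) and Bd = assms(7) and Zd = assms(8) and ind = assms(9)
  define N where "N = (\<Sum>i\<in>UNIV. (cmod (hc$i))\<^sup>2)"
  define \<kappa> where "\<kappa> = pc / (1 + pc * N)"
  define Cinv where "Cinv = (mat 1 - (\<chi> i j. complex_of_real \<kappa> * hc$i * cnj (hc$j)) :: complex^'n^'n)"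
  define B where "B = (kron_eye Cinv :: complex^('l \<times> 'n)^('l \<times> 'n))"
  have invS: "matrix_inv (kron_eye ((\<chi> i i'. complex_of_real pc * hc$i * cnj (hc$i')) + mat 1 :: complex^'n^'n)
        :: complex^('l \<times> 'n)^('l \<times> 'n)) = B"
  proof (rule matrix_inv_eq)
    show "(kron_eye ((\<chi> i i'. complex_of_real pc * hc$i * cnj (hc$i')) + mat 1 :: complex^'n^'n)
        :: complex^('l \<times> 'n)^('l \<times> 'n)) ** B = mat 1"
      unfolding B_def kron_mult Cinv_def \<kappa>_def N_def rank1_inv[OF pc] kron_mat1 ..
  qed
  have hermB: "hermitian_mat B" unfolding B_def Cinv_def by (intro hermitian_kron hermitian_rank1)
  define w where "w = (\<chi> i. cnj (hs$i) / complex_of_real (norm hs))"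
  define G where "G = outerH ((\<chi> i. hs$i * (\<Sum>k\<in>UNIV. hs$k * w$k)) :: complex^'n) ss"
  define c where "c = complex_of_real (sqrt ps) *s cvec G"
  have Yeq: "(\<lambda>\<omega>. (complex_of_real (sqrt ps) * \<beta> \<omega>) *s cvec G + zc \<omega>) = (\<lambda>\<omega>. \<beta> \<omega> *s c + zc \<omega>)"
    by (simp add: c_def fun_eq_iff vec_eq_iff algebra_simps)
  define \<gamma> where "\<gamma> = Re (herm_form c B)"
  define D where "D = pi ^ CARD('l \<times> 'n) * Re (det (kron_eye ((\<chi> i i'. complex_of_real pc * hc$i * cnj (hc$i')) + mat 1 :: complex^'n^'n)
        :: complex^('l \<times> 'n)^('l \<times> 'n)))"
  have Z: "distributed M lborel zc (\<lambda>x. ennreal (exp (- Re (herm_form x B)) / D))"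
    using Zd unfolding cn_density_def invS D_def .
  have MI: "prob_space.mutual_information M 2 lborel lborel (\<lambda>\<omega>. \<beta> \<omega> *s c + zc \<omega>) \<beta> = log 2 (1 + \<alpha>s * \<gamma>)"
  proof (rule main_generic[OF P al Bd Z ind continuous_herm continuous_bil])
    show "Re (herm_form (x + b *s c) B) = Re (herm_form x B) + 2 * Re (cnj b * bil c B x) + (cmod b)\<^sup>2 * \<gamma>" for x b
      unfolding \<gamma>_def by (rule herm_shift(1)[OF hermB])
    show "bil c B (x + b *s c) = bil c B x + b * complex_of_real \<gamma>" for x b
      unfolding \<gamma>_def by (rule herm_shift(2)[OF hermB])
  qed
  have gam: "1 + \<alpha>s * \<gamma> = 1 + ps * real CARD('l) * \<alpha>s * (norm hs)^2 *
                ((norm hs)^2 - pc * (cmod (\<Sum>i\<in>UNIV. cnj (hs$i) * hc$i))^2 / (1 + pc * (norm hc)^2))"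
  proof -
    have nhs: "0 < norm hs" using hs0 by simp
    have L: "(\<Sum>l\<in>UNIV. (cmod (ss$l))\<^sup>2) = real CARD('l)"
      using ssn by (simp add: norm_vec_sq[symmetric])
    have Nn: "N = (norm hc)\<^sup>2" by (simp add: N_def norm_vec_sq)
    have hsq: "(\<Sum>k\<in>UNIV. hs$k * cnj (hs$k)) = complex_of_real ((norm hs)\<^sup>2)"
      unfolding norm_vec_sq of_real_sum
      by (intro sum.cong refl) (simp add: complex_norm_square del: of_real_power)
    have wsum: "(\<Sum>k\<in>UNIV. hs$k * w$k) = complex_of_real (norm hs)"
    proof -
      have "(\<Sum>k\<in>UNIV. hs$k * w$k) = (\<Sum>k\<in>UNIV. hs$k * cnj (hs$k)) / complex_of_real (norm hs)"
        by (simp add: w_def sum_divide_distrib)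
      also have "\<dots> = complex_of_real (norm hs)" using nhs
        by (simp add: hsq power2_eq_square)
      finally show ?thesis .
    qed
    define u where "u = (\<chi> l. cnj (ss$l))"
    define v where "v = (\<chi> n. complex_of_real (sqrt ps * norm hs) * hs$n)"
    have cform: "c = (\<chi> p. u$(fst p) * v$(snd p))"
      by (simp add: vec_eq_iff c_def G_def cvec_def outerH_def wsum u_def v_def algebra_simps)
    have v2: "(\<Sum>n\<in>UNIV. (cmod (v$n))\<^sup>2) = ps * (norm hs)\<^sup>2 * (norm hs)\<^sup>2"
    proof -
      have "(\<Sum>n\<in>UNIV. (cmod (v$n))\<^sup>2) = (\<Sum>n\<in>UNIV. ps * (norm hs)\<^sup>2 * (cmod (hs$n))\<^sup>2)"
        using ps by (intro sum.cong refl) (simp add: v_def norm_mult power_mult_distrib)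
      also have "\<dots> = ps * (norm hs)\<^sup>2 * (norm hs)\<^sup>2"
        by (simp add: sum_distrib_left[symmetric] norm_vec_sq)
      finally show ?thesis .
    qed
    have vh: "(cmod (\<Sum>i\<in>UNIV. cnj (v$i) * hc$i))\<^sup>2 = ps * (norm hs)\<^sup>2 * (cmod (\<Sum>i\<in>UNIV. cnj (hs$i) * hc$i))\<^sup>2"
    proof -
      have "(\<Sum>i\<in>UNIV. cnj (v$i) * hc$i) = complex_of_real (sqrt ps * norm hs) * (\<Sum>i\<in>UNIV. cnj (hs$i) * hc$i)"
        by (simp add: v_def sum_distrib_left algebra_simps)
      then show ?thesis using ps by (simp add: norm_mult power_mult_distrib)
    qed
    have "herm_form c B = complex_of_real (real CARD('l)) *
        complex_of_real (ps * (norm hs)\<^sup>2 * (norm hs)\<^sup>2 - \<kappa> * (ps * (norm hs)\<^sup>2 * (cmod (\<Sum>i\<in>UNIV. cnj (hs$i) * hc$i))\<^sup>2))"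
      unfolding cform B_def herm_form_kron Cinv_def herm_form_rank1
      by (simp only: L v2 vh u_def vec_lambda_beta complex_mod_cnj)
    then have geq: "\<gamma> = real CARD('l) * (ps * (norm hs)\<^sup>2 * (norm hs)\<^sup>2 - \<kappa> * (ps * (norm hs)\<^sup>2 * (cmod (\<Sum>i\<in>UNIV. cnj (hs$i) * hc$i))\<^sup>2))"
      unfolding \<gamma>_def by (simp del: of_real_power)
    have dpos: "0 < 1 + pc * (norm hc)\<^sup>2" using pc by (simp add: add_pos_nonneg)
    show ?thesis unfolding geq \<kappa>_def Nn using dpos
      by (simp add: field_simps power2_eq_square)
  qed
  show ?thesis
    unfolding Let_def w_def[symmetric] G_def[symmetric] Yeq MI gam ..
qed

end
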